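(* Let $\alpha(\cdot)$ and $\beta(\cdot)$ be continuous, positive, integrable functions on $(0,\infty)$ such that $\lim_{u\to\infty}\beta(u)/\alpha(u)=\rho\in[0,\infty]$. Then $$\lim_{z\to\infty}\frac{\int_0^\infty\phi(z;0,u)\beta(u)\,du}{\int_0^\infty\phi(z;0,u)\alpha(u)\,du}=\rho,$$ where $\phi(\cdot;0,u)$ is the $N(0,u)$ density. *)

theory Defs
  imports "HOL-Probability.Probability"
begin

text \<open>phi(z;0,u), the N(0,u) density (variance u), via the library's normal_density
  whose second argument is the standard deviation.\<close>
definition phi0 :: "real \<Rightarrow> real \<Rightarrow> real" where
  "phi0 z u = normal_density 0 (sqrt u) z"

end

theory Submission
  imports Defs "HOL-Analysis.Analysis"
begin

lemma phi0_eq: "u > 0 \<Longrightarrow> phi0 z u = exp (- z\<^sup>2 / (2*u)) / sqrt (2*pi*u)"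
  by (simp add: phi0_def normal_density_def)

lemma phi0_nonneg: "0 \<le> phi0 z u"
  by (simp add: phi0_def)

lemma phi0_meas[measurable]: "(\<lambda>u. phi0 z u) \<in> borel_measurable borel"
  unfolding phi0_def normal_density_def by measurable

lemma exp_neg_le: "(t::real) > 0 \<Longrightarrow> exp (-t) \<le> 1/t"
proof -
  assume t: "t > 0"
  have "t \<le> exp t" using exp_ge_add_one_self[of t] by linarith
  then show ?thesis using t by (simp add: exp_minus inverse_eq_divide frac_le)
qed

lemma phi_upper:
  assumes z: "z \<ge> 1" and u: "0 < u" "u \<le> M"
  shows "phi0 z u \<le> 6 * sqrt M * exp (- z\<^sup>2 / (3*M))"
proof -
  have M: "M > 0" using u by linarith
  have z2: "z\<^sup>2 \<ge> 1" using z by (simp add: one_le_power)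
  have a: "z\<^sup>2 / (2*u) = z\<^sup>2 / (3*u) + z\<^sup>2 / (6*u)" using u by (simp add: field_simps)
  have b: "z\<^sup>2 / (3*M) \<le> z\<^sup>2 / (3*u)" using u z2 by (intro divide_left_mono) auto
  have c: "1 / (6*u) \<le> z\<^sup>2 / (6*u)" using u z2 by (intro divide_right_mono) auto
  have e1: "- z\<^sup>2 / (2*u) \<le> - z\<^sup>2 / (3*M) + - (1 / (6*u))" using a b c by simp
  have "exp (- z\<^sup>2 / (2*u)) \<le> exp (- z\<^sup>2 / (3*M)) * exp (- (1/(6*u)))"
    using e1 by (simp add: exp_add[symmetric])
  also have "\<dots> \<le> exp (- z\<^sup>2 / (3*M)) * (6*u)"
    using exp_neg_le[of "1/(6*u)"] u by (intro mult_left_mono) auto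
  finally have f: "exp (- z\<^sup>2 / (2*u)) \<le> exp (- z\<^sup>2 / (3*M)) * (6*u)" .
  have s: "sqrt (2*pi*u) = sqrt (2*pi) * sqrt u" by (simp add: real_sqrt_mult)
  have sp: "sqrt (2*pi) \<ge> 1" using pi_gt3 by simp
  have g: "u / sqrt (2*pi*u) \<le> sqrt M"
  proof -
    have "u / sqrt (2*pi*u) = sqrt u / sqrt (2*pi)" using u s
      by (simp add: field_simps)
    also have "\<dots> \<le> sqrt u" using sp u by (simp add: divide_le_eq)
    also have "\<dots> \<le> sqrt M" using u by simp
    finally show ?thesis .
  qed
  have "phi0 z u \<le> exp (- z\<^sup>2 / (3*M)) * (6*u) / sqrt (2*pi*u)"
    using f u by (simp add: phi0_eq divide_right_mono)
  also have "\<dots> = 6 * exp (- z\<^sup>2 / (3*M)) * (u / sqrt (2*pi*u))" by simp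
  also have "\<dots> \<le> 6 * exp (- z\<^sup>2 / (3*M)) * sqrt M" using g by (intro mult_left_mono) auto
  finally show ?thesis by (simp add: ac_simps)
qed

lemma phi_le6: assumes "z \<ge> 1" "u > 0" shows "phi0 z u \<le> 6"
proof (cases "u \<le> 1")
  case True
  have "phi0 z u \<le> 6 * sqrt 1 * exp (- z\<^sup>2 / (3*1))" using phi_upper[OF assms(1,2) True] by simp
  also have "\<dots> \<le> 6" by simp
  finally show ?thesis .
next
  case False
  have "phi0 z u = exp (- z\<^sup>2 / (2*u)) / sqrt (2*pi*u)" using assms by (simp add: phi0_eq)
  also have "\<dots> \<le> 1 / sqrt (2*pi*u)" using False by (intro divide_right_mono) auto
  also have "\<dots> \<le> 1"
  proof -
    have "1 \<le> 2*pi*u" using False pi_gt3 by (smt (verit) mult_less_cancel_left1)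
    then show ?thesis by simp
  qed
  finally show ?thesis by simp
qed

lemma phi_lower:
  assumes M: "M > 0" and u: "2*M \<le> u" "u \<le> 3*M"
  shows "exp (- z\<^sup>2 / (4*M)) / sqrt (6*pi*M) \<le> phi0 z u"
proof -
  have up: "u > 0" using M u by linarith
  have "z\<^sup>2 / (2*u) \<le> z\<^sup>2 / (4*M)" using M u by (intro divide_left_mono) auto
  then have e: "exp (- z\<^sup>2 / (4*M)) \<le> exp (- z\<^sup>2 / (2*u))" by simp
  have s: "sqrt (2*pi*u) \<le> sqrt (6*pi*M)" using u by simp
  have "exp (- z\<^sup>2 / (4*M)) / sqrt (6*pi*M) \<le> exp (- z\<^sup>2 / (2*u)) / sqrt (6*pi*M)"
    using e M by (intro divide_right_mono) auto
  also have "\<dots> \<le> exp (- z\<^sup>2 / (2*u)) / sqrt (2*pi*u)"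
    using s up by (intro divide_left_mono) auto
  finally show ?thesis using up by (simp add: phi0_eq)
qed


lemma int_phi:
  assumes z: "z \<ge> 1" and f: "set_integrable lborel {0<..} (f :: real \<Rightarrow> real)"
  shows "set_integrable lborel {0<..} (\<lambda>u. phi0 z u * f u)"
proof (rule set_integrable_bound[where f = "\<lambda>u. 6 * f u"])
  show "set_integrable lborel {0<..} (\<lambda>u. 6 * f u)" using f by simp
  have m: "(\<lambda>x. indicator {0<..} x *\<^sub>R f x) \<in> borel_measurable lborel"
    using borel_measurable_integrable[OF f[unfolded set_integrable_def]] .
  have "(\<lambda>x. phi0 z x * (indicator {0<..} x *\<^sub>R f x)) \<in> borel_measurable lborel"
    using m by measurable
  then show "set_borel_measurable lborel {0<..} (\<lambda>u. phi0 z u * f u)"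
    unfolding set_borel_measurable_def by (simp add: ac_simps)
  show "AE x in lborel. x \<in> {0<..} \<longrightarrow> norm (phi0 z x * f x) \<le> norm (6 * f x)"
  proof (rule AE_I2, intro impI)
    fix x :: real assume "x \<in> {0<..}"
    then have "phi0 z x \<le> 6" using phi_le6 z by auto
    then show "norm (phi0 z x * f x) \<le> norm (6 * f x)"
      using phi0_nonneg[of z x] by (simp add: abs_mult mult_right_mono)
  qed
qed

lemma int_le_lin:
  fixes g f1 f2 :: "real \<Rightarrow> real"
  assumes "set_integrable lborel S g" "set_integrable lborel S f1" "set_integrable lborel S f2"
    and "\<And>u. u \<in> S \<Longrightarrow> g u \<le> a * f1 u + b * f2 u"
  shows "(LBINT u:S. g u) \<le> a * (LBINT u:S. f1 u) + b * (LBINT u:S. f2 u)"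
proof -
  have i1: "set_integrable lborel S (\<lambda>u. a * f1 u)" using assms(2) by simp
  have i2: "set_integrable lborel S (\<lambda>u. b * f2 u)" using assms(3) by simp
  have "(LBINT u:S. g u) \<le> (LBINT u:S. a * f1 u + b * f2 u)"
    by (rule set_integral_mono[OF assms(1) set_integral_add(1)[OF i1 i2] assms(4)])
  also have "\<dots> = a * (LBINT u:S. f1 u) + b * (LBINT u:S. f2 u)"
    using set_integral_add(2)[OF i1 i2] by simp
  finally show ?thesis .
qed

lemma lin_le_int:
  fixes g f1 f2 :: "real \<Rightarrow> real"
  assumes "set_integrable lborel S g" "set_integrable lborel S f1" "set_integrable lborel S f2"
    and "\<And>u. u \<in> S \<Longrightarrow> a * f1 u + b * f2 u \<le> g u"
  shows "a * (LBINT u:S. f1 u) + b * (LBINT u:S. f2 u) \<le> (LBINT u:S. g u)"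
proof -
  have i1: "set_integrable lborel S (\<lambda>u. a * f1 u)" using assms(2) by simp
  have i2: "set_integrable lborel S (\<lambda>u. b * f2 u)" using assms(3) by simp
  have "(LBINT u:S. a * f1 u + b * f2 u) \<le> (LBINT u:S. g u)"
    by (rule set_integral_mono[OF set_integral_add(1)[OF i1 i2] assms(1) assms(4)])
  moreover have "(LBINT u:S. a * f1 u + b * f2 u) = a * (LBINT u:S. f1 u) + b * (LBINT u:S. f2 u)"
    using set_integral_add(2)[OF i1 i2] by simp
  ultimately show ?thesis by simp
qed

lemma decay:
  assumes M: "M > 0" and d: "d > 0"
  shows "eventually (\<lambda>z::real. k * exp (- z\<^sup>2 / (3*M)) < d * exp (- z\<^sup>2 / (4*M))) at_top"
  using eventually_ge_at_top[of "12*M*\<bar>k\<bar>/d + 1"]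
proof eventually_elim
  case (elim z)
  have z1: "z \<ge> 1" using elim M d by (smt (verit) divide_nonneg_pos mult_nonneg_nonneg)
  have zz: "z\<^sup>2 \<ge> z" using z1 by (simp add: power2_eq_square)
  define t where "t = z\<^sup>2 / (12*M)"
  have tpos: "t > 0" using z1 M by (simp add: t_def)
  have spl: "exp (- z\<^sup>2 / (3*M)) = exp (- z\<^sup>2 / (4*M)) * exp (- t)"
  proof -
    have "- z\<^sup>2 / (3*M) = - z\<^sup>2 / (4*M) + - t" using M by (simp add: t_def field_simps)
    then show ?thesis by (metis exp_add)
  qed
  have kt: "\<bar>k\<bar> < d * t"
  proof -
    have "12*M*\<bar>k\<bar>/d < z\<^sup>2" using elim zz by linarith
    then have "12*M*\<bar>k\<bar> < d * z\<^sup>2" using d by (simp add: divide_less_eq mult.commute)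
    then show ?thesis using M by (simp add: t_def field_simps)
  qed
  have "k * exp (- t) \<le> \<bar>k\<bar> * exp (- t)" by (simp add: mult_right_mono)
  also have "\<dots> \<le> \<bar>k\<bar> * (1/t)" using exp_neg_le[OF tpos] by (intro mult_left_mono) auto
  also have "\<dots> < d" using kt tpos by (simp add: field_simps)
  finally have "k * exp (- t) < d" .
  then have "exp (- z\<^sup>2 / (4*M)) * (k * exp (- t)) < exp (- z\<^sup>2 / (4*M)) * d" by simp
  then show ?case unfolding spl by (simp add: algebra_simps)
qed


lemma upper_bd:
  fixes \<alpha> \<beta> :: "real \<Rightarrow> real"
  assumes apos: "\<And>u. u > 0 \<Longrightarrow> \<alpha> u > 0" and bpos: "\<And>u. u > 0 \<Longrightarrow> \<beta> u > 0"
    and Ai: "set_integrable lborel {0<..} \<alpha>" and Bi: "set_integrable lborel {0<..} \<beta>"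
    and M: "M > 0" and z: "z \<ge> 1" and t: "t \<ge> 0" and h: "\<And>u. u \<ge> M \<Longrightarrow> \<beta> u \<le> t * \<alpha> u"
  shows "(LBINT u:{0<..}. phi0 z u * \<beta> u) \<le> t * (LBINT u:{0<..}. phi0 z u * \<alpha> u)
           + (6 * sqrt M * exp (- z\<^sup>2 / (3*M))) * (LBINT u:{0<..}. \<beta> u)"
proof (rule int_le_lin[OF int_phi[OF z Bi] int_phi[OF z Ai] Bi])
  fix u :: real assume "u \<in> {0<..}"
  then have u: "u > 0" by simp
  define E where "E = 6 * sqrt M * exp (- z\<^sup>2 / (3*M))"
  have E0: "E \<ge> 0" using M by (simp add: E_def)
  have p0: "phi0 z u \<ge> 0" by (rule phi0_nonneg)
  have a0: "\<alpha> u > 0" "\<beta> u > 0" using apos bpos u by auto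
  show "phi0 z u * \<beta> u \<le> t * (phi0 z u * \<alpha> u) + E * \<beta> u"
  proof (cases "u \<le> M")
    case True
    have "phi0 z u \<le> E" using phi_upper[OF z u True] by (simp add: E_def)
    then have "phi0 z u * \<beta> u \<le> E * \<beta> u" using a0 by (simp add: mult_right_mono)
    moreover have "t * (phi0 z u * \<alpha> u) \<ge> 0" using t p0 a0 by simp
    ultimately show ?thesis by linarith
  next
    case False
    have "phi0 z u * \<beta> u \<le> phi0 z u * (t * \<alpha> u)" using h[of u] False p0 by (simp add: mult_left_mono)
    moreover have "E * \<beta> u \<ge> 0" using E0 a0 by simp
    ultimately show ?thesis by (simp add: ac_simps)
  qed
qed

lemma lower_bd:
  fixes \<alpha> \<beta> :: "real \<Rightarrow> real"
  assumes apos: "\<And>u. u > 0 \<Longrightarrow> \<alpha> u > 0" and bpos: "\<And>u. u > 0 \<Longrightarrow> \<beta> u > 0"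
    and Ai: "set_integrable lborel {0<..} \<alpha>" and Bi: "set_integrable lborel {0<..} \<beta>"
    and M: "M > 0" and z: "z \<ge> 1" and h: "\<And>u. u \<ge> M \<Longrightarrow> s * \<alpha> u \<le> \<beta> u"
  shows "s * (LBINT u:{0<..}. phi0 z u * \<alpha> u)
           + (- (6 * sqrt M * exp (- z\<^sup>2 / (3*M)) * \<bar>s\<bar>)) * (LBINT u:{0<..}. \<alpha> u)
         \<le> (LBINT u:{0<..}. phi0 z u * \<beta> u)"
proof (rule lin_le_int[OF int_phi[OF z Bi] int_phi[OF z Ai] Ai])
  fix u :: real assume "u \<in> {0<..}"
  then have u: "u > 0" by simp
  define E where "E = 6 * sqrt M * exp (- z\<^sup>2 / (3*M))"
  have E0: "E \<ge> 0" using M by (simp add: E_def)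
  have p0: "phi0 z u \<ge> 0" by (rule phi0_nonneg)
  have a0: "\<alpha> u > 0" "\<beta> u > 0" using apos bpos u by auto
  show "s * (phi0 z u * \<alpha> u) + (- (E * \<bar>s\<bar>)) * \<alpha> u \<le> phi0 z u * \<beta> u"
  proof (cases "u \<le> M")
    case True
    have pe: "phi0 z u \<le> E" using phi_upper[OF z u True] by (simp add: E_def)
    have "s * (phi0 z u * \<alpha> u) \<le> \<bar>s\<bar> * (phi0 z u * \<alpha> u)" using p0 a0 by (simp add: mult_right_mono)
    also have "\<dots> \<le> \<bar>s\<bar> * (E * \<alpha> u)" using pe a0 by (intro mult_left_mono mult_right_mono) auto
    finally have "s * (phi0 z u * \<alpha> u) + (- (E * \<bar>s\<bar>)) * \<alpha> u \<le> 0" by (simp add: algebra_simps)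
    moreover have "phi0 z u * \<beta> u \<ge> 0" using p0 a0 by simp
    ultimately show ?thesis by linarith
  next
    case False
    have "phi0 z u * (s * \<alpha> u) \<le> phi0 z u * \<beta> u" using h[of u] False p0 by (simp add: mult_left_mono)
    moreover have "(- (E * \<bar>s\<bar>)) * \<alpha> u \<le> 0" using E0 a0 by (simp add: mult_nonneg_nonneg)
    ultimately show ?thesis by (simp add: ac_simps)
  qed
qed

lemma D_lower:
  fixes \<alpha> :: "real \<Rightarrow> real"
  assumes apos: "\<And>u. u > 0 \<Longrightarrow> \<alpha> u > 0" and Ai: "set_integrable lborel {0<..} \<alpha>"
    and M: "M > 0" and z: "z \<ge> 1" and m: "m > 0" and hm: "\<And>u. u \<in> {2*M..3*M} \<Longrightarrow> m \<le> \<alpha> u"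
  shows "exp (- z\<^sup>2 / (4*M)) * (m * M / sqrt (6*pi*M)) \<le> (LBINT u:{0<..}. phi0 z u * \<alpha> u)"
proof -
  define c where "c = exp (- z\<^sup>2 / (4*M)) / sqrt (6*pi*M) * m"
  have feq: "(\<lambda>u. indicator {0<..} u *\<^sub>R (c * indicator {2*M..3*M} u)) = (\<lambda>u. c * indicator {2*M..3*M} u)"
    using M by (auto simp: fun_eq_iff split: split_indicator)
  have ii: "integrable lborel (\<lambda>u. c * indicator {2*M..3*M} u :: real)"
    by (intro integrable_mult_right integrable_real_indicator) (use M in auto)
  have int: "set_integrable lborel {0<..} (\<lambda>u. c * indicator {2*M..3*M} u)"
    unfolding set_integrable_def feq by (rule ii)
  have val: "(LBINT u:{0<..}. c * indicator {2*M..3*M} u) = c * M"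
    unfolding set_lebesgue_integral_def feq using M by simp
  have le: "(LBINT u:{0<..}. c * indicator {2*M..3*M} u) \<le> (LBINT u:{0<..}. phi0 z u * \<alpha> u)"
  proof (rule set_integral_mono[OF int int_phi[OF z Ai]])
    fix u :: real assume "u \<in> {0<..}"
    then have u: "u > 0" by simp
    have p0: "phi0 z u \<ge> 0" by (rule phi0_nonneg)
    show "c * indicator {2*M..3*M} u \<le> phi0 z u * \<alpha> u"
    proof (cases "u \<in> {2*M..3*M}")
      case True
      have "c \<le> phi0 z u * \<alpha> u" unfolding c_def
        using phi_lower[OF M, of u z] True hm[OF True] m p0 by (intro mult_mono) auto
      then show ?thesis using True by simp
    next
      case False
      then show ?thesis using p0 apos[OF u] by simp
    qed
  qed
  have e: "exp (- z\<^sup>2 / (4*M)) * (m * M / sqrt (6*pi*M)) = c * M" by (simp add: c_def)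
  show ?thesis using le unfolding e val[symmetric] .
qed

lemma get_m:
  fixes \<alpha> :: "real \<Rightarrow> real"
  assumes "continuous_on {0<..} \<alpha>" "\<And>u. u > 0 \<Longrightarrow> \<alpha> u > 0" "M > 0"
  shows "\<exists>m>0. \<forall>u\<in>{2*M..3*M}. m \<le> \<alpha> u"
proof -
  have c: "continuous_on {2*M..3*M} \<alpha>" by (rule continuous_on_subset[OF assms(1)]) (use assms(3) in auto)
  obtain x where x: "x \<in> {2*M..3*M}" "\<forall>y\<in>{2*M..3*M}. \<alpha> x \<le> \<alpha> y"
    using continuous_attains_inf[OF compact_Icc _ c] assms(3) by auto
  have "\<alpha> x > 0" using x(1) assms(2,3) by auto
  then show ?thesis using x(2) by blast
qed


theorem lemmaS5:
  fixes \<alpha> \<beta> :: "real \<Rightarrow> real" and \<rho> :: ereal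
  assumes "continuous_on {0<..} \<alpha>" and "continuous_on {0<..} \<beta>"
    and "\<And>u. u > 0 \<Longrightarrow> \<alpha> u > 0" and "\<And>u. u > 0 \<Longrightarrow> \<beta> u > 0"
    and "set_integrable lborel {0<..} \<alpha>" and "set_integrable lborel {0<..} \<beta>"
    and "0 \<le> \<rho>"
    and "((\<lambda>u. ereal (\<beta> u / \<alpha> u)) \<longlongrightarrow> \<rho>) at_top"
  shows "((\<lambda>z. ereal ((LBINT u:{0<..}. phi0 z u * \<beta> u) / (LBINT u:{0<..}. phi0 z u * \<alpha> u)))
           \<longlongrightarrow> \<rho>) at_top"
proof -
  note apos = assms(3) and bpos = assms(4) and Ai = assms(5) and Bi = assms(6)
  define N where "N z = (LBINT u:{0<..}. phi0 z u * \<beta> u)" for z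
  define D where "D z = (LBINT u:{0<..}. phi0 z u * \<alpha> u)" for z
  define A where "A = (LBINT u:{0<..}. \<alpha> u)"
  define B where "B = (LBINT u:{0<..}. \<beta> u)"
  show ?thesis
  proof (cases \<rho>)
    case (real r)
    have hyp: "((\<lambda>u. \<beta> u / \<alpha> u) \<longlongrightarrow> r) at_top" using assms(8) real by simp
    have "((\<lambda>z. N z / D z) \<longlongrightarrow> r) at_top"
    proof (rule tendstoI)
      fix \<epsilon> :: real assume e: "\<epsilon> > 0"
      have "eventually (\<lambda>u. dist (\<beta> u / \<alpha> u) r < \<epsilon>/2) at_top"
        using tendstoD[OF hyp, of "\<epsilon>/2"] e by simp
      then obtain M0 where M0: "\<And>u. u \<ge> M0 \<Longrightarrow> dist (\<beta> u / \<alpha> u) r < \<epsilon>/2"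
        by (auto simp: eventually_at_top_linorder)
      define M where "M = max M0 1"
      have M: "M > 0" by (simp add: M_def)
      have up: "\<beta> u \<le> (r + \<epsilon>/2) * \<alpha> u" if "u \<ge> M" for u
      proof -
        have u: "u > 0" "u \<ge> M0" using that by (auto simp: M_def)
        have "\<beta> u / \<alpha> u < r + \<epsilon>/2" using M0[OF u(2)] unfolding dist_real_def abs_less_iff by linarith
        then show ?thesis using apos[OF u(1)] by (simp add: pos_divide_less_eq)
      qed
      have lo: "(r - \<epsilon>/2) * \<alpha> u \<le> \<beta> u" if "u \<ge> M" for u
      proof -
        have u: "u > 0" "u \<ge> M0" using that by (auto simp: M_def)
        have "r - \<epsilon>/2 < \<beta> u / \<alpha> u" using M0[OF u(2)] unfolding dist_real_def abs_less_iff by linarith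
        then show ?thesis using apos[OF u(1)] by (simp add: pos_less_divide_eq)
      qed
      obtain m where m: "m > 0" "\<And>u. u \<in> {2*M..3*M} \<Longrightarrow> m \<le> \<alpha> u"
        using get_m[OF assms(1) apos M] by blast
      define c0 where "c0 = m * M / sqrt (6*pi*M)"
      have c0: "c0 > 0" using m M by (simp add: c0_def)
      have ev: "eventually (\<lambda>z. z \<ge> 1 \<and>
          (6 * sqrt M * B) * exp (- z\<^sup>2 / (3*M)) < (\<epsilon>/2 * c0) * exp (- z\<^sup>2 / (4*M)) \<and>
          (6 * sqrt M * \<bar>r - \<epsilon>/2\<bar> * A) * exp (- z\<^sup>2 / (3*M)) < (\<epsilon>/2 * c0) * exp (- z\<^sup>2 / (4*M))) at_top"
        using e c0 by (intro eventually_conj eventually_ge_at_top decay[OF M]) auto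
      show "eventually (\<lambda>z. dist (N z / D z) r < \<epsilon>) at_top"
        using ev
      proof eventually_elim
        case (elim z)
        then have z: "z \<ge> 1" by simp
        define E where "E = 6 * sqrt M * exp (- z\<^sup>2 / (3*M))"
        define X where "X = exp (- z\<^sup>2 / (4*M))"
        have Dl: "X * c0 \<le> D z" unfolding X_def c0_def D_def by (rule D_lower[OF apos Ai M z m])
        have Xp: "X > 0" by (simp add: X_def)
        have Dp: "D z > 0" using Dl Xp c0 by (smt (verit) mult_pos_pos)
        have U: "N z \<le> (r + \<epsilon>/2) * D z + E * B"
          unfolding N_def D_def E_def B_def
          by (rule upper_bd[OF apos bpos Ai Bi M z _ up]) (use e \<open>0 \<le> \<rho>\<close> real in auto)
        have L: "(r - \<epsilon>/2) * D z + (- (E * \<bar>r - \<epsilon>/2\<bar>)) * A \<le> N z"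
          unfolding N_def D_def E_def A_def
          by (rule lower_bd[OF apos bpos Ai Bi M z lo])
        have EB: "E * B < \<epsilon>/2 * D z"
        proof -
          have "E * B < (\<epsilon>/2 * c0) * X" using elim by (simp add: E_def X_def ac_simps)
          also have "\<dots> \<le> \<epsilon>/2 * D z" using Dl e by (simp add: ac_simps)
          finally show ?thesis .
        qed
        have EA: "E * \<bar>r - \<epsilon>/2\<bar> * A < \<epsilon>/2 * D z"
        proof -
          have "E * \<bar>r - \<epsilon>/2\<bar> * A < (\<epsilon>/2 * c0) * X" using elim by (simp add: E_def X_def ac_simps)
          also have "\<dots> \<le> \<epsilon>/2 * D z" using Dl e by (simp add: ac_simps)
          finally show ?thesis .
        qed
        have "N z - r * D z < \<epsilon> * D z" using U EB by (simp add: algebra_simps)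
        moreover have "r * D z - N z < \<epsilon> * D z" using L EA by (simp add: algebra_simps)
        ultimately have "\<bar>N z - r * D z\<bar> < \<epsilon> * D z" by (simp add: abs_less_iff)
        moreover have "N z / D z - r = (N z - r * D z) / D z" using Dp by (simp add: field_simps)
        ultimately show ?case using Dp by (simp add: dist_real_def abs_divide divide_less_eq)
      qed
    qed
    then show ?thesis unfolding real N_def D_def by simp
  next
    case PInf
    have hyp: "\<forall>r. eventually (\<lambda>u. ereal r < ereal (\<beta> u / \<alpha> u)) at_top"
      using assms(8) PInf by (simp add: tendsto_PInfty)
    have "\<forall>K. eventually (\<lambda>z. ereal K < ereal (N z / D z)) at_top"
    proof
      fix K :: real
      define s where "s = \<bar>K\<bar> + 1"
      have s: "s > 0" by (simp add: s_def)
      obtain M0 where M0: "\<And>u. u \<ge> M0 \<Longrightarrow> s < \<beta> u / \<alpha> u"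
        using hyp[rule_format, of s] by (auto simp: eventually_at_top_linorder)
      define M where "M = max M0 1"
      have M: "M > 0" by (simp add: M_def)
      have lo: "s * \<alpha> u \<le> \<beta> u" if "u \<ge> M" for u
      proof -
        have u: "u > 0" "u \<ge> M0" using that by (auto simp: M_def)
        show ?thesis using M0[OF u(2)] apos[OF u(1)] by (simp add: pos_less_divide_eq)
      qed
      obtain m where m: "m > 0" "\<And>u. u \<in> {2*M..3*M} \<Longrightarrow> m \<le> \<alpha> u"
        using get_m[OF assms(1) apos M] by blast
      define c0 where "c0 = m * M / sqrt (6*pi*M)"
      have c0: "c0 > 0" using m M by (simp add: c0_def)
      have ev: "eventually (\<lambda>z. z \<ge> 1 \<and>
          (6 * sqrt M * \<bar>s\<bar> * A) * exp (- z\<^sup>2 / (3*M)) < c0 * exp (- z\<^sup>2 / (4*M))) at_top"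
        by (intro eventually_conj eventually_ge_at_top decay[OF M c0])
      show "eventually (\<lambda>z. ereal K < ereal (N z / D z)) at_top"
        using ev
      proof eventually_elim
        case (elim z)
        then have z: "z \<ge> 1" by simp
        define E where "E = 6 * sqrt M * exp (- z\<^sup>2 / (3*M))"
        define X where "X = exp (- z\<^sup>2 / (4*M))"
        have Dl: "X * c0 \<le> D z" unfolding X_def c0_def D_def by (rule D_lower[OF apos Ai M z m])
        have Xp: "X > 0" by (simp add: X_def)
        have Dp: "D z > 0" using Dl Xp c0 by (smt (verit) mult_pos_pos)
        have L: "s * D z + (- (E * \<bar>s\<bar>)) * A \<le> N z"
          unfolding N_def D_def E_def A_def
          by (rule lower_bd[OF apos bpos Ai Bi M z lo])
        have EA: "E * \<bar>s\<bar> * A < D z"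
        proof -
          have "E * \<bar>s\<bar> * A < c0 * X" using elim by (simp add: E_def X_def ac_simps)
          also have "\<dots> \<le> D z" using Dl by (simp add: ac_simps)
          finally show ?thesis .
        qed
        have "(s - 1) * D z < N z" using L EA by (simp add: algebra_simps)
        moreover have "K * D z \<le> (s - 1) * D z" using Dp by (intro mult_right_mono) (auto simp: s_def)
        ultimately have "K * D z < N z" by linarith
        then show ?case using Dp by (simp add: less_divide_eq)
      qed
    qed
    then show ?thesis unfolding PInf N_def D_def by (simp add: tendsto_PInfty)
  next
    case MInf
    then show ?thesis using assms(7) by simp
  qed
qed

end
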